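(* For every set $P$ of $n\ge 3$ points in general position, the $\Theta_6$ graph of $P$ has at most $5n-11$ edges.
   Context: A finite point set $P$ in the plane is in general position if no line through two points of $P$ makes an angle of $0^\circ$, $60^\circ$ or $120^\circ$ with the horizontal. For a point $p$, let $A_i(p)$ ($i=1,\dots,6$) be the closed cone with apex $p$ between the rays from $p$ at angles $(i-1)\pi/3$ and $i\pi/3$ measured counter-clockwise from the positive $x$-axis. The $\Theta_6$ graph of $P$ has vertex set $P$, and for each $p\in P$ and each $i\in\{1,\dots,6\}$ with $A_i(p)\cap(P\setminus\{p\})\neq\emptyset$, it contains the edge $pq$, where $q$ is the point of $A_i(p)\cap(P\setminus\{p\})$ whose orthogonal projection onto the bisector of $A_i(p)$ is nearest to $p$ (this point is unique by general position). *)

theory Defs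
  imports Complex_Main
begin

type_synonym point = "real \<times> real"

definition ray_dir :: "nat \<Rightarrow> point" where
  "ray_dir k = (cos (real k * pi / 3), sin (real k * pi / 3))"

definition bisector_dir :: "nat \<Rightarrow> point" where
  "bisector_dir i = (cos ((2 * real i - 1) * pi / 6), sin ((2 * real i - 1) * pi / 6))"

definition cone :: "nat \<Rightarrow> point \<Rightarrow> point set" where
  "cone i p = {q. \<exists>a b. a \<ge> 0 \<and> b \<ge> 0 \<and>
      q = (fst p + a * fst (ray_dir (i - 1)) + b * fst (ray_dir i),
           snd p + a * snd (ray_dir (i - 1)) + b * snd (ray_dir i))}"

definition proj_dist :: "nat \<Rightarrow> point \<Rightarrow> point \<Rightarrow> real" where
  "proj_dist i p q = (fst q - fst p) * fst (bisector_dir i) + (snd q - snd p) * snd (bisector_dir i)"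

text \<open>General position: no line through two points has angle 0, 60 or 120 degrees
  with the horizontal, i.e. q - p is never parallel to ray_dir 0, 1, 2.\<close>
definition general_position :: "point set \<Rightarrow> bool" where
  "general_position P \<longleftrightarrow>
     (\<forall>p\<in>P. \<forall>q\<in>P. p \<noteq> q \<longrightarrow> (\<forall>k\<in>{0,1,2::nat}. \<forall>t::real.
        (fst q - fst p, snd q - snd p) \<noteq> (t * fst (ray_dir k), t * snd (ray_dir k))))"

definition theta6_edges :: "point set \<Rightarrow> point set set" where
  "theta6_edges P = {{p, q} | p q. p \<in> P \<and> (\<exists>i\<in>{1..6::nat}.
      q \<in> cone i p \<inter> (P - {p}) \<and>
      (\<forall>r \<in> cone i p \<inter> (P - {p}). proj_dist i p q \<le> proj_dist i p r))}"

end

theory Submission imports Defs begin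

abbreviation s3 where "s3 \<equiv> sqrt (3::real)"

lemma cs: fixes x y :: real assumes "x = y" shows "cos x = cos y" "sin x = sin y" using assms by auto

lemma rd0: "ray_dir 0 = (1, 0)" by (simp add: ray_dir_def)
lemma rd1: "ray_dir 1 = (1/2, s3/2)" by (simp add: ray_dir_def cos_60 sin_60)
lemma rd2: "ray_dir 2 = (-1/2, s3/2)"
proof -
  have e: "real 2 * pi / 3 = pi - pi/3" by simp
  show ?thesis unfolding ray_dir_def cs[OF e] cos_pi_minus sin_pi_minus by (simp add: cos_60 sin_60)
qed
lemma rd3: "ray_dir 3 = (-1, 0)" by (simp add: ray_dir_def)
lemma rd4: "ray_dir 4 = (-1/2, -s3/2)"
proof -
  have e: "real 4 * pi / 3 = pi + pi/3" by simp
  show ?thesis unfolding ray_dir_def cs[OF e] cos_add sin_add by (simp add: cos_60 sin_60)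
qed
lemma rd5: "ray_dir 5 = (1/2, -s3/2)"
proof -
  have e: "real 5 * pi / 3 = 2*pi - pi/3" by simp
  show ?thesis unfolding ray_dir_def cs[OF e] cos_diff sin_diff by (simp add: cos_60 sin_60)
qed
lemma rd6: "ray_dir 6 = (1, 0)"
proof -
  have e: "real 6 * pi / 3 = 2*pi" by simp
  show ?thesis unfolding ray_dir_def cs[OF e] by simp
qed

lemma bd1: "bisector_dir 1 = (s3/2, 1/2)"
proof -
  have e: "(2 * real 1 - 1) * pi / 6 = pi/6" by simp
  show ?thesis unfolding bisector_dir_def cs[OF e] by (simp add: cos_30 sin_30)
qed
lemma bd2: "bisector_dir 2 = (0, 1)"
proof -
  have e: "(2 * real 2 - 1) * pi / 6 = pi/2" by simp
  show ?thesis unfolding bisector_dir_def cs[OF e] by simp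
qed
lemma bd3: "bisector_dir 3 = (-s3/2, 1/2)"
proof -
  have e: "(2 * real 3 - 1) * pi / 6 = pi - pi/6" by simp
  show ?thesis unfolding bisector_dir_def cs[OF e] cos_pi_minus sin_pi_minus by (simp add: cos_30 sin_30)
qed
lemma bd4: "bisector_dir 4 = (-s3/2, -1/2)"
proof -
  have e: "(2 * real 4 - 1) * pi / 6 = pi + pi/6" by simp
  show ?thesis unfolding bisector_dir_def cs[OF e] cos_add sin_add by (simp add: cos_30 sin_30)
qed
lemma bd5: "bisector_dir 5 = (0, -1)"
proof -
  have e: "(2 * real 5 - 1) * pi / 6 = pi + pi/2" by simp
  show ?thesis unfolding bisector_dir_def cs[OF e] cos_add sin_add by simp
qed
lemma bd6: "bisector_dir 6 = (s3/2, -1/2)"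
proof -
  have e: "(2 * real 6 - 1) * pi / 6 = 2*pi - pi/6" by simp
  show ?thesis unfolding bisector_dir_def cs[OF e] cos_diff sin_diff by (simp add: cos_30 sin_30)
qed

definition A :: "point \<Rightarrow> real" where "A p = snd p"
definition B :: "point \<Rightarrow> real" where "B p = s3/2 * fst p - snd p / 2"
definition C :: "point \<Rightarrow> real" where "C p = - s3/2 * fst p - snd p / 2"

definition F1 :: "nat \<Rightarrow> point \<Rightarrow> real" where
  "F1 i = (if i = 1 then A else if i = 2 then (\<lambda>p. - B p) else if i = 3 then A
           else if i = 4 then (\<lambda>p. - A p) else if i = 5 then B else (\<lambda>p. - A p))"
definition F2 :: "nat \<Rightarrow> point \<Rightarrow> real" where
  "F2 i = (if i = 1 then B else if i = 2 then (\<lambda>p. - C p) else if i = 3 then C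
           else if i = 4 then (\<lambda>p. - B p) else if i = 5 then C else (\<lambda>p. - C p))"

lemma cone_iff: "q \<in> cone i p \<longleftrightarrow> (\<exists>a b. a\<ge>0 \<and> b\<ge>0 \<and>
   fst q = fst p + a*fst(ray_dir(i-1)) + b*fst(ray_dir i) \<and>
   snd q = snd p + a*snd(ray_dir(i-1)) + b*snd(ray_dir i))"
  by (cases q; cases p) (auto simp: cone_def)

lemma s3facts: "s3 > 0" "s3 * s3 = 3" by auto

lemma rd1': "ray_dir (Suc 0) = (1/2, s3/2)" using rd1 by simp
lemma bd1': "bisector_dir (Suc 0) = (s3/2, 1/2)" using bd1 by simp
lemmas rdall = rd0 rd1 rd2 rd3 rd4 rd5 rd6 rd1' 

lemma cone_char1: "q \<in> cone 1 p \<longleftrightarrow> F1 1 p \<le> F1 1 q \<and> F2 1 p \<le> F2 1 q"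
proof
  have s: "s3 > 0" "s3 * s3 = 3" by auto
  assume "q \<in> cone 1 p"
  then obtain a b where ab: "a\<ge>0" "b\<ge>0" "fst q = fst p + a*fst(ray_dir(1-1)) + b*fst(ray_dir 1)"
      "snd q = snd p + a*snd(ray_dir(1-1)) + b*snd(ray_dir 1)" unfolding cone_iff by blast
  have nn: "0 \<le> a*s3" "0 \<le> b*s3" using ab s by auto
  have qe: "q = (fst p + a*fst(ray_dir(1-1)) + b*fst(ray_dir 1), snd p + a*snd(ray_dir(1-1)) + b*snd(ray_dir 1))"
    using ab by (simp add: prod_eq_iff)
  have e1: "F1 1 q - F1 1 p = b*s3/2" unfolding F1_def A_def B_def C_def qe by (simp add: rdall field_simps)
  have e2: "F2 1 q - F2 1 p = a*s3/2" unfolding F2_def A_def B_def C_def qe by (simp add: rdall field_simps)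
  show "F1 1 p \<le> F1 1 q \<and> F2 1 p \<le> F2 1 q" using e1 e2 nn by simp

next
  have s: "s3 > 0" "s3 * s3 = 3" by auto
  obtain x y where q: "q = (x,y)" by force
  obtain x0 y0 where p: "p = (x0,y0)" by force
  assume "F1 1 p \<le> F1 1 q \<and> F2 1 p \<le> F2 1 q"
  then show "q \<in> cone 1 p" unfolding cone_iff q p F1_def F2_def A_def B_def C_def
    apply (simp add: rdall)
    apply (rule exI[of _ "2*(s3/2*(x-x0)-(y-y0)/2)/s3"], rule conjI)
    prefer 2 apply (rule exI[of _ "2*(y-y0)/s3"])
    using s by (auto simp: field_simps)
qed

lemma cone_char2: "q \<in> cone 2 p \<longleftrightarrow> F1 2 p \<le> F1 2 q \<and> F2 2 p \<le> F2 2 q"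
proof
  have s: "s3 > 0" "s3 * s3 = 3" by auto
  assume "q \<in> cone 2 p"
  then obtain a b where ab: "a\<ge>0" "b\<ge>0" "fst q = fst p + a*fst(ray_dir(2-1)) + b*fst(ray_dir 2)"
      "snd q = snd p + a*snd(ray_dir(2-1)) + b*snd(ray_dir 2)" unfolding cone_iff by blast
  have nn: "0 \<le> a*s3" "0 \<le> b*s3" using ab s by auto
  have qe: "q = (fst p + a*fst(ray_dir(2-1)) + b*fst(ray_dir 2), snd p + a*snd(ray_dir(2-1)) + b*snd(ray_dir 2))"
    using ab by (simp add: prod_eq_iff)
  have e1: "F1 2 q - F1 2 p = b*s3/2" unfolding F1_def A_def B_def C_def qe by (simp add: rdall field_simps)
  have e2: "F2 2 q - F2 2 p = a*s3/2" unfolding F2_def A_def B_def C_def qe by (simp add: rdall field_simps)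
  show "F1 2 p \<le> F1 2 q \<and> F2 2 p \<le> F2 2 q" using e1 e2 nn by simp

next
  have s: "s3 > 0" "s3 * s3 = 3" by auto
  obtain x y where q: "q = (x,y)" by force
  obtain x0 y0 where p: "p = (x0,y0)" by force
  assume "F1 2 p \<le> F1 2 q \<and> F2 2 p \<le> F2 2 q"
  then show "q \<in> cone 2 p" unfolding cone_iff q p F1_def F2_def A_def B_def C_def
    apply (simp add: rdall)
    apply (rule exI[of _ "2*(-(-s3/2*(x-x0)-(y-y0)/2))/s3"], rule conjI)
    prefer 2 apply (rule exI[of _ "2*(-(s3/2*(x-x0)-(y-y0)/2))/s3"])
    using s by (auto simp: field_simps)
qed

lemma cone_char3: "q \<in> cone 3 p \<longleftrightarrow> F1 3 p \<le> F1 3 q \<and> F2 3 p \<le> F2 3 q"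
proof
  have s: "s3 > 0" "s3 * s3 = 3" by auto
  assume "q \<in> cone 3 p"
  then obtain a b where ab: "a\<ge>0" "b\<ge>0" "fst q = fst p + a*fst(ray_dir(3-1)) + b*fst(ray_dir 3)"
      "snd q = snd p + a*snd(ray_dir(3-1)) + b*snd(ray_dir 3)" unfolding cone_iff by blast
  have nn: "0 \<le> a*s3" "0 \<le> b*s3" using ab s by auto
  have qe: "q = (fst p + a*fst(ray_dir(3-1)) + b*fst(ray_dir 3), snd p + a*snd(ray_dir(3-1)) + b*snd(ray_dir 3))"
    using ab by (simp add: prod_eq_iff)
  have e1: "F1 3 q - F1 3 p = a*s3/2" unfolding F1_def A_def B_def C_def qe by (simp add: rdall field_simps)
  have e2: "F2 3 q - F2 3 p = b*s3/2" unfolding F2_def A_def B_def C_def qe by (simp add: rdall field_simps)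
  show "F1 3 p \<le> F1 3 q \<and> F2 3 p \<le> F2 3 q" using e1 e2 nn by simp

next
  have s: "s3 > 0" "s3 * s3 = 3" by auto
  obtain x y where q: "q = (x,y)" by force
  obtain x0 y0 where p: "p = (x0,y0)" by force
  assume "F1 3 p \<le> F1 3 q \<and> F2 3 p \<le> F2 3 q"
  then show "q \<in> cone 3 p" unfolding cone_iff q p F1_def F2_def A_def B_def C_def
    apply (simp add: rdall)
    apply (rule exI[of _ "2*(y-y0)/s3"], rule conjI)
    prefer 2 apply (rule exI[of _ "2*(-s3/2*(x-x0)-(y-y0)/2)/s3"])
    using s by (auto simp: field_simps)
qed

lemma cone_char4: "q \<in> cone 4 p \<longleftrightarrow> F1 4 p \<le> F1 4 q \<and> F2 4 p \<le> F2 4 q"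
proof
  have s: "s3 > 0" "s3 * s3 = 3" by auto
  assume "q \<in> cone 4 p"
  then obtain a b where ab: "a\<ge>0" "b\<ge>0" "fst q = fst p + a*fst(ray_dir(4-1)) + b*fst(ray_dir 4)"
      "snd q = snd p + a*snd(ray_dir(4-1)) + b*snd(ray_dir 4)" unfolding cone_iff by blast
  have nn: "0 \<le> a*s3" "0 \<le> b*s3" using ab s by auto
  have qe: "q = (fst p + a*fst(ray_dir(4-1)) + b*fst(ray_dir 4), snd p + a*snd(ray_dir(4-1)) + b*snd(ray_dir 4))"
    using ab by (simp add: prod_eq_iff)
  have e1: "F1 4 q - F1 4 p = b*s3/2" unfolding F1_def A_def B_def C_def qe by (simp add: rdall field_simps)
  have e2: "F2 4 q - F2 4 p = a*s3/2" unfolding F2_def A_def B_def C_def qe by (simp add: rdall field_simps)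
  show "F1 4 p \<le> F1 4 q \<and> F2 4 p \<le> F2 4 q" using e1 e2 nn by simp

next
  have s: "s3 > 0" "s3 * s3 = 3" by auto
  obtain x y where q: "q = (x,y)" by force
  obtain x0 y0 where p: "p = (x0,y0)" by force
  assume "F1 4 p \<le> F1 4 q \<and> F2 4 p \<le> F2 4 q"
  then show "q \<in> cone 4 p" unfolding cone_iff q p F1_def F2_def A_def B_def C_def
    apply (simp add: rdall)
    apply (rule exI[of _ "2*(-(s3/2*(x-x0)-(y-y0)/2))/s3"], rule conjI)
    prefer 2 apply (rule exI[of _ "2*(-(y-y0))/s3"])
    using s by (auto simp: field_simps)
qed

lemma cone_char5: "q \<in> cone 5 p \<longleftrightarrow> F1 5 p \<le> F1 5 q \<and> F2 5 p \<le> F2 5 q"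
proof
  have s: "s3 > 0" "s3 * s3 = 3" by auto
  assume "q \<in> cone 5 p"
  then obtain a b where ab: "a\<ge>0" "b\<ge>0" "fst q = fst p + a*fst(ray_dir(5-1)) + b*fst(ray_dir 5)"
      "snd q = snd p + a*snd(ray_dir(5-1)) + b*snd(ray_dir 5)" unfolding cone_iff by blast
  have nn: "0 \<le> a*s3" "0 \<le> b*s3" using ab s by auto
  have qe: "q = (fst p + a*fst(ray_dir(5-1)) + b*fst(ray_dir 5), snd p + a*snd(ray_dir(5-1)) + b*snd(ray_dir 5))"
    using ab by (simp add: prod_eq_iff)
  have e1: "F1 5 q - F1 5 p = b*s3/2" unfolding F1_def A_def B_def C_def qe by (simp add: rdall field_simps)
  have e2: "F2 5 q - F2 5 p = a*s3/2" unfolding F2_def A_def B_def C_def qe by (simp add: rdall field_simps)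
  show "F1 5 p \<le> F1 5 q \<and> F2 5 p \<le> F2 5 q" using e1 e2 nn by simp

next
  have s: "s3 > 0" "s3 * s3 = 3" by auto
  obtain x y where q: "q = (x,y)" by force
  obtain x0 y0 where p: "p = (x0,y0)" by force
  assume "F1 5 p \<le> F1 5 q \<and> F2 5 p \<le> F2 5 q"
  then show "q \<in> cone 5 p" unfolding cone_iff q p F1_def F2_def A_def B_def C_def
    apply (simp add: rdall)
    apply (rule exI[of _ "2*(-s3/2*(x-x0)-(y-y0)/2)/s3"], rule conjI)
    prefer 2 apply (rule exI[of _ "2*(s3/2*(x-x0)-(y-y0)/2)/s3"])
    using s by (auto simp: field_simps)
qed

lemma cone_char6: "q \<in> cone 6 p \<longleftrightarrow> F1 6 p \<le> F1 6 q \<and> F2 6 p \<le> F2 6 q"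
proof
  have s: "s3 > 0" "s3 * s3 = 3" by auto
  assume "q \<in> cone 6 p"
  then obtain a b where ab: "a\<ge>0" "b\<ge>0" "fst q = fst p + a*fst(ray_dir(6-1)) + b*fst(ray_dir 6)"
      "snd q = snd p + a*snd(ray_dir(6-1)) + b*snd(ray_dir 6)" unfolding cone_iff by blast
  have nn: "0 \<le> a*s3" "0 \<le> b*s3" using ab s by auto
  have qe: "q = (fst p + a*fst(ray_dir(6-1)) + b*fst(ray_dir 6), snd p + a*snd(ray_dir(6-1)) + b*snd(ray_dir 6))"
    using ab by (simp add: prod_eq_iff)
  have e1: "F1 6 q - F1 6 p = a*s3/2" unfolding F1_def A_def B_def C_def qe by (simp add: rdall field_simps)
  have e2: "F2 6 q - F2 6 p = b*s3/2" unfolding F2_def A_def B_def C_def qe by (simp add: rdall field_simps)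
  show "F1 6 p \<le> F1 6 q \<and> F2 6 p \<le> F2 6 q" using e1 e2 nn by simp

next
  have s: "s3 > 0" "s3 * s3 = 3" by auto
  obtain x y where q: "q = (x,y)" by force
  obtain x0 y0 where p: "p = (x0,y0)" by force
  assume "F1 6 p \<le> F1 6 q \<and> F2 6 p \<le> F2 6 q"
  then show "q \<in> cone 6 p" unfolding cone_iff q p F1_def F2_def A_def B_def C_def
    apply (simp add: rdall)
    apply (rule exI[of _ "2*(-(y-y0))/s3"], rule conjI)
    prefer 2 apply (rule exI[of _ "2*(-(-s3/2*(x-x0)-(y-y0)/2))/s3"])
    using s by (auto simp: field_simps)
qed


lemma ABC: "A p + B p + C p = 0" unfolding A_def B_def C_def by simp

lemma cone_char:
  assumes "i \<in> {1..6}"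
  shows "q \<in> cone i p \<longleftrightarrow> F1 i p \<le> F1 i q \<and> F2 i p \<le> F2 i q"
proof -
  from assms have "i = 1 \<or> i = 2 \<or> i = 3 \<or> i = 4 \<or> i = 5 \<or> i = 6" by auto
  then show ?thesis by (elim disjE) (simp_all only: cone_char1 cone_char2 cone_char3 cone_char4 cone_char5 cone_char6)
qed

lemma proj_char:
  assumes "i \<in> {1..6}"
  shows "proj_dist i p q = (F1 i q - F1 i p) + (F2 i q - F2 i p)"
proof -
  from assms have "i = 1 \<or> i = 2 \<or> i = 3 \<or> i = 4 \<or> i = 5 \<or> i = 6" by auto
  then show ?thesis
    by (elim disjE; simp add: proj_dist_def F1_def F2_def A_def B_def C_def bd1 bd1' bd2 bd3 bd4 bd5 bd6 field_simps)
qed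

definition D :: "point \<Rightarrow> point \<Rightarrow> real" where
  "D p q = max (max \<bar>A q - A p\<bar> \<bar>B q - B p\<bar>) \<bar>C q - C p\<bar>"

lemma D_sym: "D p q = D q p" unfolding D_def by (simp add: abs_minus_commute)

lemma Fdist:
  assumes "i \<in> {1..6}"
  shows "D p q = max (max \<bar>F1 i q - F1 i p\<bar> \<bar>F2 i q - F2 i p\<bar>) \<bar>F1 i q - F1 i p + (F2 i q - F2 i p)\<bar>"
proof -
  have c: "C q - C p = - (A q - A p) - (B q - B p)" using ABC[of p] ABC[of q] by linarith
  from assms have "i = 1 \<or> i = 2 \<or> i = 3 \<or> i = 4 \<or> i = 5 \<or> i = 6" by auto
  then show ?thesis unfolding D_def using c
    by (elim disjE; auto simp: F1_def F2_def max_def abs_if)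
qed

lemma gp_inj:
  assumes gp: "general_position P" and "p \<in> P" "q \<in> P" "p \<noteq> q"
  shows "A p \<noteq> A q \<and> B p \<noteq> B q \<and> C p \<noteq> C q"
proof -
  have g: "\<And>k t. k \<in> {0,1,2::nat} \<Longrightarrow> (fst q - fst p, snd q - snd p) \<noteq> (t * fst (ray_dir k), t * snd (ray_dir k))"
    using gp assms unfolding general_position_def by blast
  have s: "s3 * s3 = 3" by simp
  have "A p \<noteq> A q"
  proof
    assume "A p = A q"
    then show False using g[of 0 "fst q - fst p"] by (simp add: A_def rd0)
  qed
  moreover have "B p \<noteq> B q"
  proof
    assume h: "B p = B q"
    then have "snd q - snd p = s3 * (fst q - fst p)" unfolding B_def by (simp add: algebra_simps)
    then show False using g[of 1 "2*(fst q - fst p)"] by (simp add: rd1 rd1' algebra_simps)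
  qed
  moreover have "C p \<noteq> C q"
  proof
    assume h: "C p = C q"
    then have "snd q - snd p = - s3 * (fst q - fst p)" unfolding C_def by (simp add: algebra_simps)
    then show False using g[of 2 "-2*(fst q - fst p)"] by (simp add: rd2 algebra_simps)
  qed
  ultimately show ?thesis by blast
qed

lemma F_inj:
  assumes "i \<in> {1..6}" "general_position P" "p \<in> P" "q \<in> P" "p \<noteq> q"
  shows "F1 i p \<noteq> F1 i q \<and> F2 i p \<noteq> F2 i q \<and> F1 i p + F2 i p \<noteq> F1 i q + F2 i q"
proof -
  have h: "A p \<noteq> A q" "B p \<noteq> B q" "C p \<noteq> C q" using gp_inj[OF assms(2-5)] by auto
  have c: "A p + B p = - C p" "A q + B q = - C q" "A p + C p = - B p" "A q + C q = - B q"
     "B p + C p = - A p" "B q + C q = - A q" using ABC[of p] ABC[of q] by linarith+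
  from assms have "i = 1 \<or> i = 2 \<or> i = 3 \<or> i = 4 \<or> i = 5 \<or> i = 6" by auto
  then show ?thesis using h c by (elim disjE; simp add: F1_def F2_def; linarith)
qed

lemma exists_cone:
  assumes "general_position P" "p \<in> P" "q \<in> P" "p \<noteq> q"
  shows "\<exists>i\<in>{1..6}. q \<in> cone i p"
proof -
  have h: "A p \<noteq> A q" "B p \<noteq> B q" "C p \<noteq> C q" using gp_inj[OF assms] by auto
  have s: "A p + B p + C p = 0" "A q + B q + C q = 0" using ABC by auto
  have "(A p \<le> A q \<and> B p \<le> B q) \<or> (B q \<le> B p \<and> C q \<le> C p) \<or> (A p \<le> A q \<and> C p \<le> C q)
     \<or> (A q \<le> A p \<and> B q \<le> B p) \<or> (B p \<le> B q \<and> C p \<le> C q) \<or> (A q \<le> A p \<and> C q \<le> C p)"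
    using h s by linarith
  then show ?thesis
    using cone_char1[of q p] cone_char2[of q p] cone_char3[of q p] cone_char4[of q p] cone_char5[of q p] cone_char6[of q p]
    unfolding F1_def F2_def by auto
qed

lemma arith_key:
  fixes u v x y :: real
  assumes "u > 0" "v > 0" "x \<ge> 0" "y \<ge> 0" "u + v < x + y"
  shows "max (max \<bar>u\<bar> \<bar>v\<bar>) \<bar>u + v\<bar> < max (max \<bar>x\<bar> \<bar>y\<bar>) \<bar>x + y\<bar>"
    and "max (max \<bar>x - u\<bar> \<bar>y - v\<bar>) \<bar>x - u + (y - v)\<bar> < max (max \<bar>x\<bar> \<bar>y\<bar>) \<bar>x + y\<bar>"
  using assms by (auto simp: max_def abs_if)

definition Mx :: "'a set \<Rightarrow> ('a\<Rightarrow>real) \<Rightarrow> ('a\<Rightarrow>real) \<Rightarrow> 'a set" where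
  "Mx P f g = {p\<in>P. \<forall>q\<in>P. q\<noteq>p \<longrightarrow> \<not>(f p \<le> f q \<and> g p \<le> g q)}"

lemma Mx_comm: "Mx P f g = Mx P g f" unfolding Mx_def by auto

lemma Mx_sub: "Mx P f g \<subseteq> P" unfolding Mx_def by auto

lemma inj_less: "inj_on f P \<Longrightarrow> p \<in> P \<Longrightarrow> q \<in> P \<Longrightarrow> p \<noteq> q \<Longrightarrow> f q \<le> f p \<Longrightarrow> f q < (f p::real)"
  by (metis inj_onD order_le_less)

lemma argmax: assumes "finite P" "P \<noteq> {}" shows "\<exists>X\<in>P. \<forall>q\<in>P. (f::'a\<Rightarrow>real) q \<le> f X"
proof -
  have "Max (f ` P) \<in> f ` P" using assms by auto
  then obtain X where "X \<in> P" "f X = Max (f ` P)" by auto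
  then show ?thesis using assms by (metis Max_ge finite_imageI imageI)
qed

lemma max_in_Mx: assumes "X\<in>P" "\<forall>q\<in>P. f q \<le> f X" "inj_on f P" shows "X \<in> Mx P f g"
  unfolding Mx_def using assms inj_less[OF assms(3)] by fastforce

lemma dom_by_max: assumes "finite P" "W\<in>P" "inj_on f P"
  shows "\<exists>q\<in>Mx P f g. f W \<le> f q \<and> g W \<le> g q"
proof -
  let ?T = "{q\<in>P. f W \<le> f q \<and> g W \<le> g q}"
  have "finite ?T" "?T \<noteq> {}" using assms by auto
  have "\<exists>q\<in>?T. \<forall>q'\<in>?T. f q' \<le> f q" by (rule argmax) fact+
  then obtain q where q: "q \<in> ?T" "\<forall>q'\<in>?T. f q' \<le> f q" by blast
  have "q \<in> Mx P f g" unfolding Mx_def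
  proof (safe)
    show "q \<in> P" using q by auto
  next
    fix q' assume "q' \<in> P" "q' \<noteq> q" "f q \<le> f q'" "g q \<le> g q'"
    then have "q' \<in> ?T" using q by auto
    then have "f q' \<le> f q" using q by auto
    then show False using inj_less[OF assms(3) \<open>q' \<in> P\<close>, of q] q \<open>q' \<noteq> q\<close> \<open>f q \<le> f q'\<close> by auto
  qed
  then show ?thesis using q by auto
qed

lemma helperH:
  fixes x y z :: "'a \<Rightarrow> real"
  assumes fin: "finite P" and c3: "card P \<ge> 3" and sz: "\<forall>p\<in>P. x p + y p + z p = 0"
    and ix: "inj_on x P" and iy: "inj_on y P" and iz: "inj_on z P"
    and X: "X \<in> P" "\<forall>q\<in>P. x q \<le> x X \<and> y q \<le> y X"
  shows "5 \<le> card (Mx P x z) + card (Mx P y z)"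
proof -
  have ne: "P \<noteq> {}" using c3 by auto
  obtain Z where Z: "Z \<in> P" "\<forall>q\<in>P. z q \<le> z Z" using argmax[OF fin ne, of z] by blast
  have below: "z X < z W" if "W \<in> P" "W \<noteq> X" for W
  proof -
    have "x W < x X" "y W < y X" using inj_less[OF ix X(1) that(1)] inj_less[OF iy X(1) that(1)] X that by auto
    moreover have "x W + y W + z W = 0" "x X + y X + z X = 0" using sz X(1) that(1) by auto
    ultimately show ?thesis by linarith
  qed
  have ZX: "Z \<noteq> X"
  proof
    assume "Z = X"
    have "P \<noteq> {X}" using c3 by auto
    then obtain W where "W \<in> P" "W \<noteq> X" using X(1) by blast
    then show False using below Z \<open>Z = X\<close> by force
  qed
  have a1: "X \<in> Mx P x z" by (rule max_in_Mx[OF X(1) _ ix]) (use X(2) in auto)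
  have a2: "X \<in> Mx P y z" by (rule max_in_Mx[OF X(1) _ iy]) (use X(2) in auto)
  have a3: "Z \<in> Mx P z x" "Z \<in> Mx P z y" by (rule max_in_Mx[OF Z(1) Z(2) iz])+
  have s1: "{X,Z} \<subseteq> Mx P x z" using a1 a3(1) Mx_comm[of P z x] by simp
  have s2: "{X,Z} \<subseteq> Mx P y z" using a2 a3(2) Mx_comm[of P z y] by simp
  have cXZ: "card {X,Z} = 2" using ZX by auto
  have f1: "finite (Mx P x z)" "finite (Mx P y z)" by (rule finite_subset[OF Mx_sub fin])+
  have c1: "card (Mx P x z) \<ge> 2" "card (Mx P y z) \<ge> 2"
    using card_mono[OF f1(1) s1] card_mono[OF f1(2) s2] cXZ by auto
  show ?thesis
  proof (rule ccontr)
    assume "\<not> ?thesis"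
    then have "card (Mx P x z) \<le> 2" "card (Mx P y z) \<le> 2" using c1 by auto
    then have e1: "Mx P x z = {X,Z}" and e2: "Mx P y z = {X,Z}"
      using card_subset_eq[OF f1(1) s1] card_subset_eq[OF f1(2) s2] cXZ c1 by auto
    have "\<not> P \<subseteq> {X,Z}"
    proof
      assume "P \<subseteq> {X,Z}"
      then have "card P \<le> card {X,Z}" by (intro card_mono) auto
      then show False using cXZ c3 by auto
    qed
    then obtain W where W: "W \<in> P" "W \<noteq> X" "W \<noteq> Z" by blast
    obtain q where q: "q \<in> Mx P x z" "x W \<le> x q" "z W \<le> z q" using dom_by_max[OF fin W(1) ix] by blast
    obtain q' where q': "q' \<in> Mx P y z" "y W \<le> y q'" "z W \<le> z q'" using dom_by_max[OF fin W(1) iy] by blast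
    have "q = Z" using q e1 below[OF W(1) W(2)] by auto
    moreover have "q' = Z" using q' e2 below[OF W(1) W(2)] by auto
    ultimately have h: "x W \<le> x Z" "y W \<le> y Z" "z W \<le> z Z" using q q' by auto
    have "x W < x Z" using inj_less[OF ix Z(1) W(1)] W h by auto
    moreover have "x W + y W + z W = 0" "x Z + y Z + z Z = 0" using sz W(1) Z(1) by auto
    ultimately show False using h by linarith
  qed
qed

lemma six:
  fixes x y z :: "'a \<Rightarrow> real"
  assumes fin: "finite P" and c3: "card P \<ge> 3" and sz: "\<forall>p\<in>P. x p + y p + z p = 0"
    and ix: "inj_on x P" and iy: "inj_on y P" and iz: "inj_on z P"
  shows "6 \<le> card (Mx P x y) + card (Mx P y z) + card (Mx P x z)"
proof -
  have ne: "P \<noteq> {}" using c3 by auto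
  obtain X where X: "X \<in> P" "\<forall>q\<in>P. x q \<le> x X" using argmax[OF fin ne, of x] by blast
  obtain Y where Y: "Y \<in> P" "\<forall>q\<in>P. y q \<le> y Y" using argmax[OF fin ne, of y] by blast
  obtain Z where Z: "Z \<in> P" "\<forall>q\<in>P. z q \<le> z Z" using argmax[OF fin ne, of z] by blast
  have f: "finite (Mx P f g)" for f g by (rule finite_subset[OF Mx_sub fin])
  have c1: "card (Mx P f g) \<ge> 1" if "V \<in> Mx P f g" for f g V
    using that f[of f g] by (metis One_nat_def Suc_leI card_gt_0_iff empty_iff)
  have c2: "card (Mx P f g) \<ge> 2" if "V \<in> Mx P f g" "V' \<in> Mx P f g" "V \<noteq> V'" for f g V V'
  proof -
    have "card {V,V'} = 2" using that by auto
    then show ?thesis using card_mono[OF f[of f g], of "{V,V'}"] that by auto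
  qed
  have XM: "X \<in> Mx P x g" for g using max_in_Mx[OF X ix] .
  have YM: "Y \<in> Mx P y g" for g using max_in_Mx[OF Y iy] .
  have ZM: "Z \<in> Mx P z g" for g using max_in_Mx[OF Z iz] .
  show ?thesis
  proof (cases "X = Y")
    case True
    have "5 \<le> card (Mx P x z) + card (Mx P y z)"
      using helperH[OF fin c3 sz ix iy iz X(1)] X Y True by auto
    moreover have "card (Mx P x y) \<ge> 1" using c1[OF XM[of y]] .
    ultimately show ?thesis by linarith
  next
    case XY: False
    show ?thesis
    proof (cases "Y = Z")
      case True
      have "5 \<le> card (Mx P y x) + card (Mx P z x)"
        using helperH[of P y z x Y] fin c3 sz iy iz ix Y Z True by (auto simp: algebra_simps)
      moreover have "card (Mx P y z) \<ge> 1" using c1[OF YM[of z]] .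
      ultimately show ?thesis unfolding Mx_comm[of P y x] Mx_comm[of P z x] by linarith
    next
      case YZ: False
      show ?thesis
      proof (cases "X = Z")
        case True
        have "5 \<le> card (Mx P x y) + card (Mx P z y)"
          using helperH[of P x z y X] fin c3 sz ix iz iy X Z True by (auto simp: algebra_simps)
        moreover have "card (Mx P x z) \<ge> 1" using c1[OF XM[of z]] .
        ultimately show ?thesis unfolding Mx_comm[of P z y] by linarith
      next
        case False
        have "card (Mx P x y) \<ge> 2" using c2[OF XM YM[unfolded Mx_comm[of P y]] XY] .
        moreover have "card (Mx P y z) \<ge> 2" using c2[OF YM ZM[unfolded Mx_comm[of P z]] YZ] .
        moreover have "card (Mx P x z) \<ge> 2" using c2[OF XM ZM[unfolded Mx_comm[of P z]] False] .
        ultimately show ?thesis by auto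
      qed
    qed
  qed
qed


definition RelI :: "point set \<Rightarrow> nat \<Rightarrow> (point \<times> point) set" where
  "RelI P i = {(p,q). p \<in> P \<and> q \<in> cone i p \<inter> (P - {p}) \<and>
      (\<forall>r \<in> cone i p \<inter> (P - {p}). proj_dist i p q \<le> proj_dist i p r)}"

definition Rel :: "point set \<Rightarrow> (point \<times> point) set" where
  "Rel P = (\<Union>i\<in>{1..6}. RelI P i)"

lemma Rel_iff: "(p,q) \<in> Rel P \<longleftrightarrow> p \<in> P \<and> (\<exists>i\<in>{1..6::nat}. q \<in> cone i p \<inter> (P - {p}) \<and>
      (\<forall>r \<in> cone i p \<inter> (P - {p}). proj_dist i p q \<le> proj_dist i p r))"
  unfolding Rel_def RelI_def by blast

lemma edges_eq: "theta6_edges P = (\<lambda>(p,q). {p,q}) ` Rel P"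
proof -
  have ri: "(p,q) \<in> Rel P \<longleftrightarrow> p \<in> P \<and> (\<exists>i\<in>{1..6::nat}. q \<in> cone i p \<inter> (P - {p}) \<and>
      (\<forall>r \<in> cone i p \<inter> (P - {p}). proj_dist i p q \<le> proj_dist i p r))" for p q
    unfolding Rel_def RelI_def by blast
  have "theta6_edges P = {{p,q} | p q. (p,q) \<in> Rel P}" unfolding theta6_edges_def ri by simp
  also have "\<dots> = (\<lambda>(p,q). {p,q}) ` Rel P" by (auto simp: image_def)
  finally show ?thesis .
qed

lemma chosen:
  assumes gp: "general_position P" and pq: "p \<in> P" "q \<in> P" "p \<noteq> q"
    and hyp: "\<forall>r\<in>P. D p q \<le> D p r \<or> D p q \<le> D r q"
  shows "(p,q) \<in> Rel P"
proof -
  obtain i where i: "i \<in> {1..6}" "q \<in> cone i p" using exists_cone[OF gp pq] by blast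
  have "\<forall>r \<in> cone i p \<inter> (P - {p}). proj_dist i p q \<le> proj_dist i p r"
  proof (rule ballI, rule ccontr)
    fix r assume r: "r \<in> cone i p \<inter> (P - {p})" and "\<not> proj_dist i p q \<le> proj_dist i p r"
    then have lt: "proj_dist i p r < proj_dist i p q" by auto
    define u where "u = F1 i r - F1 i p"
    define v where "v = F2 i r - F2 i p"
    define x where "x = F1 i q - F1 i p"
    define y where "y = F2 i q - F2 i p"
    have c1: "F1 i p \<le> F1 i r \<and> F2 i p \<le> F2 i r" using r cone_char[OF i(1), of r p] by blast
    have c2: "F1 i p \<noteq> F1 i r \<and> F2 i p \<noteq> F2 i r" using F_inj[OF i(1) gp pq(1), of r] r by blast
    have uv: "u > 0" "v > 0" using c1 c2 unfolding u_def v_def by auto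
    have c3: "F1 i p \<le> F1 i q \<and> F2 i p \<le> F2 i q" using i(2) cone_char[OF i(1), of q p] by blast
    have xy: "x \<ge> 0" "y \<ge> 0" using c3 unfolding x_def y_def by auto
    have s: "u + v < x + y" using lt unfolding proj_char[OF i(1)] u_def v_def x_def y_def by simp
    have d1: "D p r = max (max \<bar>u\<bar> \<bar>v\<bar>) \<bar>u + v\<bar>" unfolding u_def v_def by (rule Fdist[OF i(1)])
    have d2: "D p q = max (max \<bar>x\<bar> \<bar>y\<bar>) \<bar>x + y\<bar>" unfolding x_def y_def by (rule Fdist[OF i(1)])
    have d3: "D r q = max (max \<bar>x - u\<bar> \<bar>y - v\<bar>) \<bar>x - u + (y - v)\<bar>"
      unfolding u_def v_def x_def y_def using Fdist[OF i(1), of r q]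
      by (simp only: diff_diff_eq2 diff_add_cancel)
    have "D p q \<le> D p r \<or> D p q \<le> D r q" using hyp r by auto
    moreover have "D p r < D p q" using arith_key(1)[OF uv xy s] unfolding d1 d2 .
    moreover have "D r q < D p q" using arith_key(2)[OF uv xy s] unfolding d3 d2 .
    ultimately show False by linarith
  qed
  moreover have "q \<in> cone i p \<inter> (P - {p})" using i pq by blast
  ultimately show ?thesis
    apply (intro Rel_iff[THEN iffD2] conjI[OF pq(1)])
    apply (rule bexI[OF _ i(1)])
    apply (rule conjI)
    by assumption+
qed

lemma cross:
  assumes fin: "finite P" and gp: "general_position P" and S: "S \<subseteq> P" "S \<noteq> {}" "P - S \<noteq> {}"
  shows "\<exists>p\<in>S. \<exists>q\<in>P-S. (p,q) \<in> Rel P \<and> (q,p) \<in> Rel P"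
proof -
  let ?X = "S \<times> (P - S)"
  have fS: "finite S" using fin S(1) by (rule finite_subset[rotated])
  have fX: "finite ?X" using fS fin by (intro finite_cartesian_product) auto
  have nX: "?X \<noteq> {}" using S by auto
  let ?m = "Min ((\<lambda>(a,b). D a b) ` ?X)"
  have "?m \<in> (\<lambda>(a,b). D a b) ` ?X" using fX nX by (intro Min_in) auto
  then obtain p q where pq: "(p,q) \<in> ?X" "D p q = ?m" by auto
  have le: "?m \<le> D a b" if "(a,b) \<in> ?X" for a b
  proof (rule Min_le)
    show "finite ((\<lambda>(a,b). D a b) ` ?X)" using fX by (rule finite_imageI)
    show "D a b \<in> (\<lambda>(a,b). D a b) ` ?X" by (rule image_eqI[where x="(a,b)"]) (use that in auto)
  qed
  have h1: "\<forall>r\<in>P. D p q \<le> D p r \<or> D p q \<le> D r q"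
  proof
    fix r assume "r \<in> P"
    show "D p q \<le> D p r \<or> D p q \<le> D r q"
    proof (cases "r \<in> S")
      case True then show ?thesis using le[of r q] pq by auto
    next
      case False then show ?thesis using le[of p r] pq \<open>r\<in>P\<close> by auto
    qed
  qed
  have h2: "\<forall>r\<in>P. D q p \<le> D q r \<or> D q p \<le> D r p"
  proof
    fix r assume "r \<in> P"
    then have "D p q \<le> D p r \<or> D p q \<le> D r q" using h1 by blast
    then show "D q p \<le> D q r \<or> D q p \<le> D r p" by (simp only: D_sym[of q p] D_sym[of q r] D_sym[of r p]) blast
  qed
  have pS: "p \<in> S" and qS: "q \<in> P - S" using pq(1) by auto
  have pP: "p \<in> P" and qP: "q \<in> P" and ne: "p \<noteq> q" using pS qS S(1) by auto
  have "(p,q) \<in> Rel P" by (rule chosen[OF gp pP qP ne h1])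
  moreover have "(q,p) \<in> Rel P" by (rule chosen[OF gp qP pP ne[symmetric] h2])
  ultimately show ?thesis using pS qS by blast
qed

definition Mut :: "point set \<Rightarrow> point set set" where
  "Mut P = {{p,q} | p q. (p,q) \<in> Rel P \<and> (q,p) \<in> Rel P}"

lemma Rel_sub: "Rel P \<subseteq> P \<times> P" unfolding Rel_def RelI_def by auto

lemma Mut_fin: "finite P \<Longrightarrow> finite (Mut P)"
proof -
  assume "finite P"
  then have "finite (Rel P)" using Rel_sub finite_subset by (metis finite_cartesian_product)
  then have "finite ((\<lambda>(p,q). {p,q}) ` Rel P)" by (rule finite_imageI)
  moreover have "Mut P \<subseteq> (\<lambda>(p,q). {p,q}) ` Rel P" unfolding Mut_def by auto
  ultimately show ?thesis by (rule finite_subset[rotated])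
qed

lemma mut_count:
  assumes fin: "finite P" and gp: "general_position P"
  shows "card P - 1 \<le> card (Mut P)"
proof -
  have "\<forall>k. k \<le> card P \<longrightarrow> (\<exists>S\<subseteq>P. card S = k \<and> k - 1 \<le> card {e\<in>Mut P. e \<subseteq> S})"
  proof
    fix k show "k \<le> card P \<longrightarrow> (\<exists>S\<subseteq>P. card S = k \<and> k - 1 \<le> card {e\<in>Mut P. e \<subseteq> S})"
    proof (induction k)
      case 0 then show ?case by auto
    next
      case (Suc k)
      show ?case
      proof
        assume k: "Suc k \<le> card P"
        then obtain S where S: "S \<subseteq> P" "card S = k" "k - 1 \<le> card {e\<in>Mut P. e \<subseteq> S}" using Suc by auto
        show "\<exists>S\<subseteq>P. card S = Suc k \<and> Suc k - 1 \<le> card {e\<in>Mut P. e \<subseteq> S}"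
        proof (cases "k = 0")
          case True
          have "P \<noteq> {}" using k by auto
          then obtain p where "p \<in> P" by auto
          then show ?thesis using True by (intro exI[of _ "{p}"]) auto
        next
          case False
          have fS: "finite S" using S(1) fin finite_subset by auto
          have "S \<noteq> {}" using False S(2) by auto
          moreover have "P - S \<noteq> {}"
          proof
            assume "P - S = {}"
            then have "P \<subseteq> S" by auto
            then have "card P \<le> card S" using fS card_mono by auto
            then show False using k S(2) by auto
          qed
          ultimately obtain p q where pq: "p \<in> S" "q \<in> P - S" "(p,q) \<in> Rel P" "(q,p) \<in> Rel P"
            using cross[OF fin gp S(1)] by blast
          let ?S' = "insert q S"
          have e: "{p,q} \<in> Mut P" unfolding Mut_def using pq(3,4) by blast
          have sub: "insert {p,q} {e\<in>Mut P. e \<subseteq> S} \<subseteq> {e\<in>Mut P. e \<subseteq> ?S'}" using e pq by auto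
          have nin: "{p,q} \<notin> {e\<in>Mut P. e \<subseteq> S}" using pq by auto
          have f2: "finite {e\<in>Mut P. e \<subseteq> ?S'}" using Mut_fin[OF fin] by auto
          have "card (insert {p,q} {e\<in>Mut P. e \<subseteq> S}) = Suc (card {e\<in>Mut P. e \<subseteq> S})"
            using nin Mut_fin[OF fin] by auto
          then have "Suc k - 1 \<le> card {e\<in>Mut P. e \<subseteq> ?S'}"
            using card_mono[OF f2 sub] S(3) False by linarith
          moreover have "card ?S' = Suc k" using pq fS S(2) by auto
          moreover have "?S' \<subseteq> P" using pq S by auto
          ultimately show ?thesis by blast
        qed
      qed
    qed
  qed
  then obtain S where "S \<subseteq> P" "card S = card P" "card P - 1 \<le> card {e\<in>Mut P. e \<subseteq> S}" by blast
  moreover have "card {e\<in>Mut P. e \<subseteq> S} \<le> card (Mut P)" using Mut_fin[OF fin] by (intro card_mono) auto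
  ultimately show ?thesis by linarith
qed


lemma Rel_irrefl: "(p,q) \<in> Rel P \<Longrightarrow> p \<noteq> q"
  unfolding Rel_iff by blast

lemma card_RelI:
  assumes fin: "finite P" and gp: "general_position P" and i: "i \<in> {1..6}"
  shows "card (RelI P i) \<le> card P - card (Mx P (F1 i) (F2 i))"
proof -
  have inj: "inj_on fst (RelI P i)"
  proof (rule inj_onI)
    fix a b assume a: "a \<in> RelI P i" and b: "b \<in> RelI P i" and e: "fst a = fst b"
    obtain p q where a': "a = (p,q)" by (rule prod.exhaust)
    obtain q' where b': "b = (p,q')" using e a' by (cases b) auto
    have A1: "q \<in> cone i p \<inter> (P - {p})" "\<forall>r \<in> cone i p \<inter> (P - {p}). proj_dist i p q \<le> proj_dist i p r" "p \<in> P"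
      using a unfolding a' RelI_def by blast+
    have B1: "q' \<in> cone i p \<inter> (P - {p})" "\<forall>r \<in> cone i p \<inter> (P - {p}). proj_dist i p q' \<le> proj_dist i p r"
      using b unfolding b' RelI_def by blast+
    have "proj_dist i p q \<le> proj_dist i p q'" "proj_dist i p q' \<le> proj_dist i p q"
      using A1(2) B1(1) B1(2) A1(1) by blast+
    then have "F1 i q + F2 i q = F1 i q' + F2 i q'" unfolding proj_char[OF i] by linarith
    then have "q = q'" using F_inj[OF i gp, of q q'] A1(1) B1(1) by blast
    then show "a = b" using a' b' by simp
  qed
  have sub: "fst ` RelI P i \<subseteq> P - Mx P (F1 i) (F2 i)"
  proof
    fix p assume "p \<in> fst ` RelI P i"
    then obtain q where pq: "(p,q) \<in> RelI P i" by force
    then have "p \<in> P" "q \<in> P" "q \<noteq> p" "q \<in> cone i p" unfolding RelI_def by blast+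
    moreover have "F1 i p \<le> F1 i q \<and> F2 i p \<le> F2 i q" using cone_char[OF i, of q p] \<open>q \<in> cone i p\<close> by blast
    ultimately show "p \<in> P - Mx P (F1 i) (F2 i)" unfolding Mx_def by blast
  qed
  have "card (RelI P i) = card (fst ` RelI P i)" using card_image[OF inj] by simp
  also have "\<dots> \<le> card (P - Mx P (F1 i) (F2 i))" using card_mono[OF _ sub] fin by auto
  also have "\<dots> = card P - card (Mx P (F1 i) (F2 i))" using card_Diff_subset[OF finite_subset[OF Mx_sub fin] Mx_sub] .
  finally show ?thesis .
qed

lemma rel_count:
  assumes fin: "finite P" and gp: "general_position P" and c3: "card P \<ge> 3"
  shows "card (Rel P) + 12 \<le> 6 * card P"
proof -
  have iA: "inj_on A P" "inj_on B P" "inj_on C P"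
    by (rule inj_onI, metis gp_inj[OF gp])+
  have iA': "inj_on (\<lambda>p. - A p) P" "inj_on (\<lambda>p. - B p) P" "inj_on (\<lambda>p. - C p) P"
    by (rule inj_onI, metis gp_inj[OF gp] neg_equal_iff_equal)+
  have o6: "6 \<le> card (Mx P A B) + card (Mx P B C) + card (Mx P A C)"
    by (rule six[OF fin c3 _ iA]) (simp add: ABC)
  have e6: "6 \<le> card (Mx P (\<lambda>p. - A p) (\<lambda>p. - B p)) + card (Mx P (\<lambda>p. - B p) (\<lambda>p. - C p)) + card (Mx P (\<lambda>p. - A p) (\<lambda>p. - C p))"
  proof (rule six[OF fin c3 _ iA'])
    show "\<forall>p\<in>P. - A p + - B p + - C p = 0"
    proof
      fix p have "A p + B p + C p = 0" by (rule ABC)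
      then show "- A p + - B p + - C p = 0" by linarith
    qed
  qed
  let ?c = "\<lambda>i. card (Mx P (F1 i) (F2 i))"
  have cle: "?c i \<le> card P" for i using card_mono[OF fin Mx_sub] .
  have fin6: "finite {1..6::nat}" by simp
  have "card (Rel P) \<le> (\<Sum>i\<in>{1..6}. card (RelI P i))" unfolding Rel_def by (rule card_UN_le[OF fin6])
  also have "\<dots> \<le> (\<Sum>i\<in>{1..6}. card P - ?c i)" by (rule sum_mono) (rule card_RelI[OF fin gp])
  also have "\<dots> = (card P - ?c 1) + (card P - ?c 2) + (card P - ?c 3) + (card P - ?c 4) + (card P - ?c 5) + (card P - ?c 6)"
    by (simp add: numeral_eq_Suc atLeastAtMostSuc_conv)
  finally have r: "card (Rel P) \<le> (card P - ?c 1) + (card P - ?c 2) + (card P - ?c 3) + (card P - ?c 4) + (card P - ?c 5) + (card P - ?c 6)" .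
  have m: "?c 1 = card (Mx P A B)" "?c 3 = card (Mx P A C)" "?c 5 = card (Mx P B C)"
    "?c 4 = card (Mx P (\<lambda>p. - A p) (\<lambda>p. - B p))" "?c 2 = card (Mx P (\<lambda>p. - B p) (\<lambda>p. - C p))"
    "?c 6 = card (Mx P (\<lambda>p. - A p) (\<lambda>p. - C p))" by (simp_all add: F1_def F2_def)
  show ?thesis using r o6 e6 m cle[of 1] cle[of 2] cle[of 3] cle[of 4] cle[of 5] cle[of 6] by linarith
qed

lemma fiber_count:
  assumes fin: "finite X" and M: "M \<subseteq> f ` X"
    and two: "\<forall>y\<in>M. \<exists>x1\<in>X. \<exists>x2\<in>X. x1 \<noteq> x2 \<and> f x1 = y \<and> f x2 = y"
  shows "card (f ` X) + card M \<le> card X"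
proof -
  define s where "s y = (SOME x. x \<in> X \<and> f x = y)" for y
  have sX: "s y \<in> X" and sf: "f (s y) = y" if "y \<in> f ` X" for y
  proof -
    have "\<exists>x. x \<in> X \<and> f x = y" using that by blast
    then have "s y \<in> X \<and> f (s y) = y" unfolding s_def by (rule someI_ex)
    then show "s y \<in> X" "f (s y) = y" by simp_all
  qed
  define t where "t y = (SOME x. x \<in> X \<and> f x = y \<and> x \<noteq> s y)" for y
  have tX: "t y \<in> X" and tf: "f (t y) = y" and ts: "t y \<noteq> s y" if "y \<in> M" for y
  proof -
    have "\<exists>x1\<in>X. \<exists>x2\<in>X. x1 \<noteq> x2 \<and> f x1 = y \<and> f x2 = y" using two that by (rule bspec)
    then obtain x1 x2 where x: "x1 \<in> X" "x2 \<in> X" "x1 \<noteq> x2" "f x1 = y" "f x2 = y" by (elim bexE conjE)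
    have "\<exists>x. x \<in> X \<and> f x = y \<and> x \<noteq> s y"
    proof (cases "x1 = s y")
      case True
      then have "x2 \<noteq> s y" using x(3) by simp
      then show ?thesis using x(2) x(5) by (intro exI[of _ x2]) simp
    next
      case False then show ?thesis using x(1) x(4) by (intro exI[of _ x1]) simp
    qed
    then have "t y \<in> X \<and> f (t y) = y \<and> t y \<noteq> s y" unfolding t_def by (rule someI_ex)
    then show "t y \<in> X" "f (t y) = y" "t y \<noteq> s y" by simp_all
  qed
  have i1: "inj_on s (f ` X)"
  proof (rule inj_onI)
    fix y y' assume a: "y \<in> f ` X" "y' \<in> f ` X" "s y = s y'"
    have "y = f (s y)" using sf[OF a(1)] by simp
    also have "\<dots> = f (s y')" using a(3) by simp
    also have "\<dots> = y'" using sf[OF a(2)] .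
    finally show "y = y'" .
  qed
  have i2: "inj_on t M"
  proof (rule inj_onI)
    fix y y' assume a: "y \<in> M" "y' \<in> M" "t y = t y'"
    have "y = f (t y)" using tf[OF a(1)] by simp
    also have "\<dots> = f (t y')" using a(3) by simp
    also have "\<dots> = y'" using tf[OF a(2)] .
    finally show "y = y'" .
  qed
  have d: "s ` (f ` X) \<inter> t ` M = {}"
  proof (rule ccontr)
    assume "s ` (f ` X) \<inter> t ` M \<noteq> {}"
    then obtain y y' where y: "y \<in> f ` X" "y' \<in> M" "s y = t y'" by blast
    have "y = f (s y)" using sf[OF y(1)] by simp
    also have "\<dots> = f (t y')" using y(3) by simp
    also have "\<dots> = y'" using tf[OF y(2)] .
    finally have "y = y'" .
    then show False using y(3) ts[OF y(2)] by simp
  qed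
  have sub: "s ` (f ` X) \<union> t ` M \<subseteq> X" using sX tX by blast
  have fM: "finite M" using M fin by (meson finite_imageI finite_subset)
  have "card (f ` X) + card M = card (s ` (f ` X)) + card (t ` M)" using card_image[OF i1] card_image[OF i2] by simp
  also have "\<dots> = card (s ` (f ` X) \<union> t ` M)" using fin fM by (intro card_Un_disjoint[OF _ _ d, symmetric]) auto
  also have "\<dots> \<le> card X" by (rule card_mono[OF fin sub])
  finally show ?thesis .
qed

theorem corollary2:
  fixes P :: "point set" and n :: nat
  assumes "finite P" and "card P = n" and "n \<ge> 3" and "general_position P"
  shows "card (theta6_edges P) \<le> 5 * n - 11"
proof -
  have fR: "finite (Rel P)" using Rel_sub assms(1) finite_subset by (metis finite_cartesian_product)
  have sub: "Mut P \<subseteq> (\<lambda>(p,q). {p,q}) ` Rel P" unfolding Mut_def by auto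
  have two: "\<forall>y\<in>Mut P. \<exists>x1\<in>Rel P. \<exists>x2\<in>Rel P. x1 \<noteq> x2 \<and> (\<lambda>(p,q). {p,q}) x1 = y \<and> (\<lambda>(p,q). {p,q}) x2 = y"
  proof
    fix y assume "y \<in> Mut P"
    then obtain p q where y: "y = {p,q}" "(p,q) \<in> Rel P" "(q,p) \<in> Rel P" unfolding Mut_def by blast
    then have "p \<noteq> q" using Rel_irrefl by blast
    then show "\<exists>x1\<in>Rel P. \<exists>x2\<in>Rel P. x1 \<noteq> x2 \<and> (\<lambda>(p,q). {p,q}) x1 = y \<and> (\<lambda>(p,q). {p,q}) x2 = y"
      using y by (intro bexI[of _ "(p,q)"] bexI[of _ "(q,p)"]) auto
  qed
  have "card (theta6_edges P) + card (Mut P) \<le> card (Rel P)"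
    unfolding edges_eq by (rule fiber_count[OF fR sub two])
  moreover have "card (Rel P) + 12 \<le> 6 * n" using rel_count[OF assms(1) assms(4)] assms(2,3) by simp
  moreover have "n - 1 \<le> card (Mut P)" using mut_count[OF assms(1) assms(4)] assms(2) by simp
  ultimately show ?thesis using assms(3) by linarith
qed

end
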